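(* Let $U\subseteq\mathbb{R}^3_{a,b,w}$ be a neighborhood of $0$, let $f(a,b,w)$ be a homogeneous polynomial of degree $k$, and let $\mathcal{L}'$ be a differential operator such that $\mathcal{L}'(\mathcal{W}^1(U))\subseteq\mathcal{W}^1(U)$. Then there exist $u,v'\in\mathcal{W}^1(U)$ such that $$(\Delta_{\mathbb{R}^3}+\mathcal{L}')u=\frac{f}{r_w^{k+1}}+v'.$$
   Context: $r_w(a,b,w)=\sqrt{a^2+b^2+w^2}$. For $\ell\in\mathbb{N}$, $\mathcal{W}^\ell(U)$ is the set of $f\in C^\infty(U\setminus\{0\})$ such that $\nabla^jf=\mathcal{O}(r_w^{\ell-j}\log r_w)$ as $r_w\to0$ for all $j\geq0$. $\Delta_{\mathbb{R}^3}$ is the Euclidean Laplacian. *)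

theory Defs
  imports "HOL-Analysis.Analysis" "HOL-Library.Landau_Symbols"
begin

text \<open>Points of R^3 with coordinates (a,b,w) = (x$1, x$2, x$3); r_w x = norm x.\<close>

definition rw :: "real^3 \<Rightarrow> real" where
  "rw x = norm x"

definition pd :: "3 \<Rightarrow> (real^3 \<Rightarrow> real) \<Rightarrow> real^3 \<Rightarrow> real" where
  "pd i f = (\<lambda>x. deriv (\<lambda>t. f (x + t *\<^sub>R axis i 1)) 0)"

fun pds :: "3 list \<Rightarrow> (real^3 \<Rightarrow> real) \<Rightarrow> real^3 \<Rightarrow> real" where
  "pds [] f = f"
| "pds (i # is) f = pd i (pds is f)"

definition smooth_on_set :: "(real^3 \<Rightarrow> real) \<Rightarrow> (real^3) set \<Rightarrow> bool" where
  "smooth_on_set f S \<longleftrightarrow>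
     (\<forall>is. continuous_on S (pds is f) \<and>
        (\<forall>i. \<forall>x\<in>S. (\<lambda>t. pds is f (x + t *\<^sub>R axis i 1)) differentiable (at 0)))"

definition W :: "nat \<Rightarrow> (real^3) set \<Rightarrow> (real^3 \<Rightarrow> real) set" where
  "W l U = {f. smooth_on_set f (U - {0}) \<and>
     (\<forall>is. pds is f \<in>
        O[at 0 within (U - {0})](\<lambda>x. rw x powr (real l - real (length is)) * ln (rw x)))}"

definition laplacian :: "(real^3 \<Rightarrow> real) \<Rightarrow> real^3 \<Rightarrow> real" where
  "laplacian u = (\<lambda>x. \<Sum>i\<in>UNIV. pd i (pd i u) x)"

definition homogeneous_poly :: "nat \<Rightarrow> (real^3 \<Rightarrow> real) \<Rightarrow> bool" where
  "homogeneous_poly k f \<longleftrightarrow>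
     (\<exists>c :: nat \<times> nat \<times> nat \<Rightarrow> real. \<forall>x.
        f x = (\<Sum>(p,q,s)\<in>{(p,q,s). p + q + s = k}. c (p,q,s) * (x$1)^p * (x$2)^q * (x$3)^s))"

definition diff_operator :: "((real^3 \<Rightarrow> real) \<Rightarrow> real^3 \<Rightarrow> real) \<Rightarrow> bool" where
  "diff_operator L \<longleftrightarrow>
     (\<exists>m. \<exists>c :: 3 list \<Rightarrow> real^3 \<Rightarrow> real. \<forall>u x.
        L u x = (\<Sum>is\<in>{is. length is \<le> m}. c is x * pds is u x))"

end

theory Submission
  imports Defs
begin

lemma pd_eq:
  assumes "(F has_derivative F') (at x)"
  shows "pd i F x = F' (axis i 1)"
proof -
  have l: "((\<lambda>t::real. x + t *\<^sub>R axis i 1) has_derivative (\<lambda>t. t *\<^sub>R axis i 1)) (at 0)"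
    by (auto intro!: derivative_eq_intros)
  have "((\<lambda>t::real. F (x + t *\<^sub>R axis i 1)) has_derivative (\<lambda>t. F' (t *\<^sub>R axis i 1))) (at 0)"
    using has_derivative_compose[OF l, of F F'] assms by simp
  moreover have "(\<lambda>t. F' (t *\<^sub>R axis i 1)) = (*) (F' (axis i 1))"
    using has_derivative_bounded_linear[OF assms]
    by (auto simp: linear_simps mult.commute)
  ultimately have "((\<lambda>t::real. F (x + t *\<^sub>R axis i 1)) has_real_derivative F' (axis i 1)) (at 0)"
    by (simp add: has_field_derivative_def)
  then show ?thesis unfolding pd_def by (rule DERIV_imp_deriv)
qed

lemma line_ev:
  assumes "x \<noteq> (0::real^3)"
  shows "eventually (\<lambda>t::real. x + t *\<^sub>R v \<noteq> 0) (nhds 0)"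
proof -
  have "((\<lambda>t::real. x + t *\<^sub>R v) \<longlongrightarrow> x + 0 *\<^sub>R v) (nhds 0)"
    by (intro tendsto_intros) (simp add: tendsto_ident_at filterlim_ident)
  then show ?thesis using tendsto_imp_eventually_ne assms by fastforce
qed

lemma pd_local:
  assumes "x \<noteq> 0" "\<And>y. y \<noteq> 0 \<Longrightarrow> F y = G y"
  shows "pd i F x = pd i G x"
  unfolding pd_def
  by (rule deriv_cong_ev) (use line_ev[OF assms(1), of "axis i 1"] assms(2) in \<open>auto elim!: eventually_mono\<close>)

inductive hp :: "nat \<Rightarrow> (real^3 \<Rightarrow> real) \<Rightarrow> bool" where
  hp_zero: "hp n (\<lambda>x. 0)"
| hp_const: "hp 0 (\<lambda>x. c)"
| hp_add: "hp n g \<Longrightarrow> hp n h \<Longrightarrow> hp n (\<lambda>x. g x + h x)"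
| hp_scale: "hp n g \<Longrightarrow> hp n (\<lambda>x. c * g x)"
| hp_mulx: "hp n g \<Longrightarrow> hp (Suc n) (\<lambda>x. x$i * g x)"

lemma sum_axis: "(\<Sum>j\<in>UNIV. (axis i 1 :: real^3)$j * a j) = a i"
proof -
  have "(axis i 1 :: real^3)$j * a j = (if i = j then a i else 0)" for j by (simp add: axis_def)
  then show ?thesis by simp
qed

lemma vecnth_deriv: "((\<lambda>x::real^3. x$i) has_derivative (\<lambda>h. h$i)) F"
  by (rule bounded_linear_imp_has_derivative) (rule bounded_linear_vec_nth)

lemma hp_D:
  assumes "hp n g"
  shows "\<exists>D. (\<forall>j. hp (n-1) (D j)) \<and> (\<forall>x. (g has_derivative (\<lambda>h. \<Sum>j\<in>UNIV. h$j * D j x)) (at x))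
     \<and> (\<forall>x. (\<Sum>j\<in>UNIV. x$j * D j x) = real n * g x) \<and> (n = 0 \<longrightarrow> (\<forall>j x. D j x = 0))"
  using assms
proof induction
  case (hp_zero n)
  show ?case by (rule exI[of _ "\<lambda>j x. 0"]) (auto intro!: derivative_eq_intros hp.intros)
next
  case (hp_const c)
  show ?case by (rule exI[of _ "\<lambda>j x. 0"]) (auto intro!: derivative_eq_intros hp.intros)
next
  case (hp_add n g h)
  then obtain D1 D2 where D1: "(\<forall>j. hp (n-1) (D1 j)) \<and> (\<forall>x. (g has_derivative (\<lambda>h. \<Sum>j\<in>UNIV. h$j * D1 j x)) (at x))
     \<and> (\<forall>x. (\<Sum>j\<in>UNIV. x$j * D1 j x) = real n * g x) \<and> (n = 0 \<longrightarrow> (\<forall>j x. D1 j x = 0))"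
    and D2: "(\<forall>j. hp (n-1) (D2 j)) \<and> (\<forall>x. (h has_derivative (\<lambda>h. \<Sum>j\<in>UNIV. h$j * D2 j x)) (at x))
     \<and> (\<forall>x. (\<Sum>j\<in>UNIV. x$j * D2 j x) = real n * h x) \<and> (n = 0 \<longrightarrow> (\<forall>j x. D2 j x = 0))"
    by blast
  show ?case
  proof (rule exI[of _ "\<lambda>j x. D1 j x + D2 j x"], intro conjI allI impI)
    fix j show "hp (n-1) (\<lambda>x. D1 j x + D2 j x)" using D1 D2 by (auto intro: hp.intros)
  next
    fix x show "((\<lambda>x. g x + h x) has_derivative (\<lambda>h. \<Sum>j\<in>UNIV. h$j * (D1 j x + D2 j x))) (at x)"
      using D1 D2 by (auto intro!: derivative_eq_intros simp: distrib_left sum.distrib)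
  next
    fix x show "(\<Sum>j\<in>UNIV. x$j * (D1 j x + D2 j x)) = real n * (g x + h x)"
      using D1 D2 by (simp add: distrib_left sum.distrib)
  next
    fix j x assume "n = 0" then show "D1 j x + D2 j x = 0" using D1 D2 by simp
  qed
next
  case (hp_scale n g c)
  then obtain D1 where D1: "(\<forall>j. hp (n-1) (D1 j)) \<and> (\<forall>x. (g has_derivative (\<lambda>h. \<Sum>j\<in>UNIV. h$j * D1 j x)) (at x))
     \<and> (\<forall>x. (\<Sum>j\<in>UNIV. x$j * D1 j x) = real n * g x) \<and> (n = 0 \<longrightarrow> (\<forall>j x. D1 j x = 0))"
    by blast
  show ?case
  proof (rule exI[of _ "\<lambda>j x. c * D1 j x"], intro conjI allI impI)
    fix j show "hp (n-1) (\<lambda>x. c * D1 j x)" using D1 by (auto intro: hp.intros)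
  next
    fix x show "((\<lambda>x. c * g x) has_derivative (\<lambda>h. \<Sum>j\<in>UNIV. h$j * (c * D1 j x))) (at x)"
      using D1 by (auto intro!: derivative_eq_intros simp: sum_distrib_left algebra_simps)
  next
    fix x show "(\<Sum>j\<in>UNIV. x$j * (c * D1 j x)) = real n * (c * g x)"
      using D1 by (simp add: sum_distrib_left[symmetric] algebra_simps)
  next
    fix j x assume "n = 0" then show "c * D1 j x = 0" using D1 by simp
  qed
next
  case (hp_mulx n g i)
  then obtain D1 where D1: "(\<forall>j. hp (n-1) (D1 j)) \<and> (\<forall>x. (g has_derivative (\<lambda>h. \<Sum>j\<in>UNIV. h$j * D1 j x)) (at x))
     \<and> (\<forall>x. (\<Sum>j\<in>UNIV. x$j * D1 j x) = real n * g x) \<and> (n = 0 \<longrightarrow> (\<forall>j x. D1 j x = 0))"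
    by blast
  show ?case
  proof (rule exI[of _ "\<lambda>j x. (if j = i then g x else 0) + x$i * D1 j x"], intro conjI allI impI)
    fix j show "hp (Suc n - 1) (\<lambda>x. (if j = i then g x else 0) + x$i * D1 j x)"
    proof (cases "n = 0")
      case True
      then have e: "(\<lambda>x. (if j = i then g x else 0) + x$i * D1 j x) = (if j = i then g else (\<lambda>x. 0))"
        using D1 by auto
      show ?thesis unfolding e using hp_mulx True by (auto intro: hp.intros)
    next
      case False
      then have "hp (Suc (n-1)) (\<lambda>x. x$i * D1 j x)" using D1 hp.hp_mulx by blast
      then have "hp n (\<lambda>x. x$i * D1 j x)" using False by simp
      moreover have "hp n (\<lambda>x. if j = i then g x else 0)"
        using hp_mulx by (cases "j = i") (auto intro: hp.intros)
      ultimately show ?thesis by (auto intro: hp.intros)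
    qed
  next
    fix x show "((\<lambda>x. x$i * g x) has_derivative (\<lambda>h. \<Sum>j\<in>UNIV. h$j * ((if j = i then g x else 0) + x$i * D1 j x))) (at x)"
    proof -
      have "((\<lambda>x. x$i * g x) has_derivative (\<lambda>h. h$i * g x + x$i * (\<Sum>j\<in>UNIV. h$j * D1 j x))) (at x)"
        using has_derivative_mult[OF vecnth_deriv[of i] D1[THEN conjunct2, THEN conjunct1, rule_format, of x]]
        by (simp add: algebra_simps)
      moreover have "(\<lambda>h. h$i * g x + x$i * (\<Sum>j\<in>UNIV. h$j * D1 j x)) = (\<lambda>h. \<Sum>j\<in>UNIV. h$j * ((if j = i then g x else 0) + x$i * D1 j x))"
      proof
        fix h :: "real^3"
        have "h$j * ((if j = i then g x else 0) + x$i * D1 j x) = (if i = j then h$i * g x else 0) + x$i * (h$j * D1 j x)" for j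
          by (auto simp: algebra_simps)
        then show "h$i * g x + x$i * (\<Sum>j\<in>UNIV. h$j * D1 j x) = (\<Sum>j\<in>UNIV. h$j * ((if j = i then g x else 0) + x$i * D1 j x))"
          by (simp add: sum.distrib sum_distrib_left)
      qed
      ultimately show ?thesis by simp
    qed
  next
    fix x show "(\<Sum>j\<in>UNIV. x$j * ((if j = i then g x else 0) + x$i * D1 j x)) = real (Suc n) * (x$i * g x)"
    proof -
      have "x$j * ((if j = i then g x else 0) + x$i * D1 j x) = (if i = j then x$i * g x else 0) + x$i * (x$j * D1 j x)" for j
        by (auto simp: algebra_simps)
      then have "(\<Sum>j\<in>UNIV. x$j * ((if j = i then g x else 0) + x$i * D1 j x)) = x$i * g x + x$i * (\<Sum>j\<in>UNIV. x$j * D1 j x)"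
        by (simp add: sum.distrib sum_distrib_left)
      then show ?thesis using D1 by (simp add: algebra_simps)
    qed
  qed simp
qed

lemma hp_pd:
  assumes "hp n g"
  shows "\<exists>D. (\<forall>j. hp (n-1) (D j)) \<and> (\<forall>x. (g has_derivative (\<lambda>h. \<Sum>j\<in>UNIV. h$j * D j x)) (at x))
     \<and> (\<forall>x. (\<Sum>j\<in>UNIV. x$j * D j x) = real n * g x) \<and> (n = 0 \<longrightarrow> (\<forall>j x. D j x = 0))
     \<and> (\<forall>j. pd j g = D j)"
proof -
  obtain D where D: "(\<forall>j. hp (n-1) (D j)) \<and> (\<forall>x. (g has_derivative (\<lambda>h. \<Sum>j\<in>UNIV. h$j * D j x)) (at x))
     \<and> (\<forall>x. (\<Sum>j\<in>UNIV. x$j * D j x) = real n * g x) \<and> (n = 0 \<longrightarrow> (\<forall>j x. D j x = 0))"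
    using hp_D[OF assms] by blast
  have "pd j g = D j" for j
  proof
    fix x
    have hd: "(g has_derivative (\<lambda>h. \<Sum>j\<in>UNIV. h$j * D j x)) (at x)" using D by blast
    show "pd j g x = D j x" using pd_eq[OF hd, of j] sum_axis by simp
  qed
  with D show ?thesis by blast
qed

lemma hp_facts:
  assumes "hp n g"
  shows hp_diff: "(g has_derivative (\<lambda>h. \<Sum>j\<in>UNIV. h$j * pd j g x)) (at x)"
    and hp_pd_hp: "hp (n-1) (pd j g)"
    and hp_euler: "(\<Sum>j\<in>UNIV. x$j * pd j g x) = real n * g x"
    and hp_pd0: "n = 0 \<Longrightarrow> pd j g x = 0"
proof -
  obtain D where D: "\<forall>j. hp (n-1) (D j)" "\<forall>x. (g has_derivative (\<lambda>h. \<Sum>j\<in>UNIV. h$j * D j x)) (at x)"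
     "\<forall>x. (\<Sum>j\<in>UNIV. x$j * D j x) = real n * g x" "n = 0 \<longrightarrow> (\<forall>j x. D j x = 0)"
     "\<forall>j. pd j g = D j"
    using hp_pd[OF assms] by blast
  show "(g has_derivative (\<lambda>h. \<Sum>j\<in>UNIV. h$j * pd j g x)) (at x)" using D(2,5) by simp
  show "hp (n-1) (pd j g)" using D(1,5) by simp
  show "(\<Sum>j\<in>UNIV. x$j * pd j g x) = real n * g x" using D(3,5) by simp
  show "n = 0 \<Longrightarrow> pd j g x = 0" using D(4,5) by simp
qed

lemma hp_sum: "finite A \<Longrightarrow> (\<And>a. a \<in> A \<Longrightarrow> hp n (G a)) \<Longrightarrow> hp n (\<lambda>x. \<Sum>a\<in>A. G a x)"
proof (induction A rule: finite_induct)
  case empty then show ?case by (simp add: hp_zero)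
next
  case (insert a A) then show ?case by (simp add: hp_add)
qed

lemma hp_lap: "hp n g \<Longrightarrow> hp (n-2) (laplacian g)"
  unfolding laplacian_def
proof (rule hp_sum)
  fix i :: 3 assume "hp n g"
  then have "hp (n-1) (pd i g)" by (rule hp_pd_hp)
  then have "hp (n-1-1) (pd i (pd i g))" by (rule hp_pd_hp)
  then show "hp (n-2) (pd i (pd i g))" by (simp add: numeral_2_eq_2)
qed simp

lemma hp_powmul: "hp n g \<Longrightarrow> hp (n+p) (\<lambda>x. x$i^p * g x)"
proof (induction p)
  case 0 then show ?case by simp
next
  case (Suc p)
  then have "hp (n+p) (\<lambda>x. x$i^p * g x)" by simp
  then have "hp (Suc (n+p)) (\<lambda>x. x$i * (x$i^p * g x))" by (rule hp_mulx)
  then show ?case by (simp add: mult.assoc)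
qed

lemma hp_bound: "hp n g \<Longrightarrow> \<exists>C\<ge>0. \<forall>x. \<bar>g x\<bar> \<le> C * norm x ^ n"
proof (induction rule: hp.induct)
  case (hp_zero n) then show ?case by (auto intro!: exI[of _ 0])
next
  case (hp_const c) then show ?case by (auto intro!: exI[of _ "\<bar>c\<bar>"])
next
  case (hp_add n g h)
  then obtain C1 C2 where "C1 \<ge> 0" "\<forall>x. \<bar>g x\<bar> \<le> C1 * norm x ^ n" "C2 \<ge> 0" "\<forall>x. \<bar>h x\<bar> \<le> C2 * norm x ^ n" by blast
  then show ?case
    by (intro exI[of _ "C1 + C2"]) (auto simp: distrib_right intro: order.trans[OF abs_triangle_ineq] add_mono)
next
  case (hp_scale n g c)
  then obtain C1 where "C1 \<ge> 0" "\<forall>x. \<bar>g x\<bar> \<le> C1 * norm x ^ n" by blast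
  then show ?case
    by (intro exI[of _ "\<bar>c\<bar> * C1"]) (auto simp: abs_mult mult.assoc intro: mult_left_mono)
next
  case (hp_mulx n g i)
  then obtain C1 where C1: "C1 \<ge> 0" "\<forall>x. \<bar>g x\<bar> \<le> C1 * norm x ^ n" by blast
  show ?case
  proof (intro exI[of _ C1] conjI allI)
    fix x :: "real^3"
    have "\<bar>x$i * g x\<bar> = \<bar>x$i\<bar> * \<bar>g x\<bar>" by (simp add: abs_mult)
    also have "\<dots> \<le> norm x * (C1 * norm x ^ n)"
      by (rule mult_mono) (use C1 component_le_norm_cart in auto)
    finally show "\<bar>x$i * g x\<bar> \<le> C1 * norm x ^ Suc n" by (simp add: algebra_simps)
  qed (use C1 in auto)
qed

lemma hp_homog: "homogeneous_poly k f \<Longrightarrow> hp k f"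
proof -
  assume "homogeneous_poly k f"
  then obtain c where c: "\<forall>x. f x = (\<Sum>(p,q,s)\<in>{(p,q,s). p + q + s = k}. c (p,q,s) * (x$1)^p * (x$2)^q * (x$3)^s)"
    unfolding homogeneous_poly_def by (elim exE)
  have fin: "finite {(p,q,s). p + q + s = (k::nat)}"
    by (rule finite_subset[of _ "{..k} \<times> {..k} \<times> {..k}"]) fastforce+
  have "hp k (\<lambda>x. \<Sum>a\<in>{(p,q,s). p + q + s = k}. (case a of (p,q,s) \<Rightarrow> c (p,q,s) * (x$1)^p * (x$2)^q * (x$3)^s))"
  proof (rule hp_sum[OF fin])
    fix a assume "a \<in> {(p,q,s). p + q + s = k}"
    then obtain p q s where a: "a = (p,q,s)" "p + q + s = k" by auto
    have "hp (0 + s) (\<lambda>x. x$3^s * 1)" by (rule hp_powmul) (rule hp_const)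
    then have "hp (0 + s + q) (\<lambda>x. x$2^q * (x$3^s * 1))" by (rule hp_powmul)
    then have "hp (0 + s + q + p) (\<lambda>x. x$1^p * (x$2^q * (x$3^s * 1)))" by (rule hp_powmul)
    then have "hp k (\<lambda>x. x$1^p * (x$2^q * (x$3^s * 1)))"
      using a(2) by (simp add: add.commute add.left_commute)
    then have "hp k (\<lambda>x. c (p,q,s) * (x$1^p * (x$2^q * (x$3^s * 1))))"
      by (rule hp_scale)
    then show "hp k (\<lambda>x. case a of (p,q,s) \<Rightarrow> c (p,q,s) * (x$1)^p * (x$2)^q * (x$3)^s)"
      using a by (simp add: mult.assoc)
  qed
  moreover have "f = (\<lambda>x. \<Sum>a\<in>{(p,q,s). p + q + s = k}. (case a of (p,q,s) \<Rightarrow> c (p,q,s) * (x$1)^p * (x$2)^q * (x$3)^s))"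
    using c by (intro ext) (simp add: case_prod_unfold)
  ultimately show ?thesis by simp
qed

lemma rw_pos: "x \<noteq> 0 \<Longrightarrow> 0 < rw x"
  by (simp add: rw_def)

lemma d_rpow:
  assumes "x \<noteq> 0"
  shows "((\<lambda>y. rw y powr b) has_derivative (\<lambda>h. b * rw x powr (b - 2) * (x \<bullet> h))) (at x)"
proof -
  have n: "(norm has_derivative (\<lambda>h. h \<bullet> sgn x)) (at x)"
    using has_derivative_norm[OF assms] by simp
  have "((\<lambda>y. norm y powr b) has_derivative (\<lambda>h. norm x powr b * (0 * ln (norm x) + (h \<bullet> sgn x) * b / norm x))) (at x)"
    by (rule has_derivative_powr[OF n has_derivative_const]) (use assms in auto)
  moreover have "(\<lambda>h. norm x powr b * (0 * ln (norm x) + (h \<bullet> sgn x) * b / norm x)) = (\<lambda>h. b * norm x powr (b - 2) * (x \<bullet> h))"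
  proof
    fix h
    have r: "norm x > 0" using assms by simp
    have e2: "norm x powr 2 = norm x ^ 2" by simp
    have "norm x powr (b - 2) * norm x powr 2 = norm x powr b" by (simp del: powr_numeral add: powr_add[symmetric])
    then have e: "norm x powr b = norm x powr (b - 2) * norm x ^ 2" using e2 by simp
    have s: "h \<bullet> sgn x = (x \<bullet> h) / norm x"
      by (simp add: sgn_div_norm inner_commute divide_inverse)
    have a: "norm x ^ 2 * ((A / norm x) * b / norm x) = b * A" for A
      using r by (simp add: power2_eq_square)
    show "norm x powr b * (0 * ln (norm x) + (h \<bullet> sgn x) * b / norm x) = b * norm x powr (b - 2) * (x \<bullet> h)"
    proof -
      have "norm x powr b * (0 * ln (norm x) + (h \<bullet> sgn x) * b / norm x) = norm x powr (b-2) * (norm x ^ 2 * ((x \<bullet> h) / norm x * b / norm x))"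
        unfolding e s by simp
      also have "\<dots> = norm x powr (b-2) * (b * (x \<bullet> h))" using a by simp
      finally show ?thesis by simp
    qed
  qed
  ultimately show ?thesis by (simp add: rw_def)
qed

lemma d_ln:
  assumes "x \<noteq> 0"
  shows "((\<lambda>y. ln (rw y)) has_derivative (\<lambda>h. rw x powr (-2) * (x \<bullet> h))) (at x)"
proof -
  have n: "(norm has_derivative (\<lambda>h. h \<bullet> sgn x)) (at x)"
    using has_derivative_norm[OF assms] by simp
  have "((\<lambda>y. ln (norm y)) has_derivative (\<lambda>h. inverse (norm x) * (h \<bullet> sgn x))) (at x)"
    using has_derivative_ln[OF _ n] assms by (simp add: mult.commute)
  moreover have "(\<lambda>h. inverse (norm x) * (h \<bullet> sgn x)) = (\<lambda>h. norm x powr (-2) * (x \<bullet> h))"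
  proof
    fix h
    have r: "norm x > 0" using assms by simp
    have s: "h \<bullet> sgn x = (x \<bullet> h) / norm x"
      by (simp add: sgn_div_norm inner_commute divide_inverse)
    have p: "norm x powr (-2) = inverse (norm x ^ 2)"
      using r by (simp add: powr_minus powr_numeral)
    show "inverse (norm x) * (h \<bullet> sgn x) = norm x powr (-2) * (x \<bullet> h)"
      unfolding s p by (simp add: power2_eq_square divide_inverse)
  qed
  ultimately show ?thesis by (simp add: rw_def)
qed

lemma inner3: "(x::real^3) \<bullet> h = x$1 * h$1 + x$2 * h$2 + x$3 * h$3"
  by (simp add: inner_vec_def sum_3)

lemma term_pow_hasd:
  assumes "hp n g" "x \<noteq> 0"
  shows "((\<lambda>y. g y * rw y powr b) has_derivative (\<lambda>h. \<Sum>j\<in>UNIV. h$j * (pd j g x * rw x powr b + (b * (x$j * g x)) * rw x powr (b-2)))) (at x)"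
proof -
  have "((\<lambda>y. g y * rw y powr b) has_derivative (\<lambda>h. g x * (b * rw x powr (b - 2) * (x \<bullet> h)) + (\<Sum>j\<in>UNIV. h$j * pd j g x) * rw x powr b)) (at x)"
    by (rule has_derivative_mult[OF hp_diff[OF assms(1)] d_rpow[OF assms(2)]])
  moreover have "(\<lambda>h. g x * (b * rw x powr (b - 2) * (x \<bullet> h)) + (\<Sum>j\<in>UNIV. h$j * pd j g x) * rw x powr b)
     = (\<lambda>h. \<Sum>j\<in>UNIV. h$j * (pd j g x * rw x powr b + (b * (x$j * g x)) * rw x powr (b-2)))"
    by (rule ext) (simp add: sum_3 inner3 algebra_simps)
  ultimately show ?thesis by simp
qed

lemma term_log_hasd:
  assumes "hp n g" "x \<noteq> 0"
  shows "((\<lambda>y. g y * rw y powr b * ln (rw y)) has_derivative (\<lambda>h. \<Sum>j\<in>UNIV. h$j * (pd j g x * rw x powr b * ln (rw x)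
     + (b * (x$j * g x)) * rw x powr (b-2) * ln (rw x) + (x$j * g x) * rw x powr (b-2)))) (at x)"
proof -
  have "((\<lambda>y. g y * rw y powr b * ln (rw y)) has_derivative (\<lambda>h. (g x * rw x powr b) * (rw x powr (-2) * (x \<bullet> h)) +
      (g x * (b * rw x powr (b - 2) * (x \<bullet> h)) + (\<Sum>j\<in>UNIV. h$j * pd j g x) * rw x powr b) * ln (rw x))) (at x)"
    by (rule has_derivative_mult[OF has_derivative_mult[OF hp_diff[OF assms(1)] d_rpow[OF assms(2)]] d_ln[OF assms(2)]])
  moreover have p: "rw x powr b * rw x powr (-2) = rw x powr (b-2)"
    by (simp del: powr_numeral add: powr_add[symmetric])
  moreover have "(\<lambda>h. (g x * rw x powr b) * (rw x powr (-2) * (x \<bullet> h)) +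
      (g x * (b * rw x powr (b - 2) * (x \<bullet> h)) + (\<Sum>j\<in>UNIV. h$j * pd j g x) * rw x powr b) * ln (rw x))
     = (\<lambda>h. \<Sum>j\<in>UNIV. h$j * (pd j g x * rw x powr b * ln (rw x)
     + (b * (x$j * g x)) * rw x powr (b-2) * ln (rw x) + (x$j * g x) * rw x powr (b-2)))"
  proof
    fix h :: "real^3"
    have "(g x * rw x powr b) * (rw x powr (-2) * (x \<bullet> h)) = g x * (x \<bullet> h) * (rw x powr b * rw x powr (-2))"
      by (simp only: mult_ac)
    then have q: "(g x * rw x powr b) * (rw x powr (-2) * (x \<bullet> h)) = g x * (x \<bullet> h) * rw x powr (b-2)"
      using p by simp
    show "(g x * rw x powr b) * (rw x powr (-2) * (x \<bullet> h)) +
      (g x * (b * rw x powr (b - 2) * (x \<bullet> h)) + (\<Sum>j\<in>UNIV. h$j * pd j g x) * rw x powr b) * ln (rw x)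
     = (\<Sum>j\<in>UNIV. h$j * (pd j g x * rw x powr b * ln (rw x)
     + (b * (x$j * g x)) * rw x powr (b-2) * ln (rw x) + (x$j * g x) * rw x powr (b-2)))"
      unfolding q by (simp add: sum_3 inner3 algebra_simps)
  qed
  ultimately show ?thesis by simp
qed

lemma term_pow_pd:
  assumes "hp n g" "x \<noteq> 0"
  shows "pd i (\<lambda>y. g y * rw y powr b) x = pd i g x * rw x powr b + (b * (x$i * g x)) * rw x powr (b-2)"
  using pd_eq[OF term_pow_hasd[OF assms], of i] sum_axis by simp

lemma term_ln_pd:
  assumes "hp n g" "x \<noteq> 0"
  shows "pd i (\<lambda>y. g y * ln (rw y)) x = pd i g x * ln (rw x) + (x$i * g x) * rw x powr (-2)"
proof -
  have "((\<lambda>y. g y * ln (rw y)) has_derivative (\<lambda>h. g x * (rw x powr (-2) * (x \<bullet> h)) + (\<Sum>j\<in>UNIV. h$j * pd j g x) * ln (rw x))) (at x)"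
    by (rule has_derivative_mult[OF hp_diff[OF assms(1)] d_ln[OF assms(2)]])
  from pd_eq[OF this, of i] show ?thesis using sum_axis[of i "\<lambda>j. pd j g x"]
    by (simp add: inner_axis algebra_simps)
qed

lemma pd_xi:
  assumes "hp n g"
  shows "pd i (\<lambda>y. c * (y$i * g y)) x = c * (g x + x$i * pd i g x)"
proof -
  have "((\<lambda>y. c * (y$i * g y)) has_derivative (\<lambda>h. c * (h$i * g x + x$i * (\<Sum>j\<in>UNIV. h$j * pd j g x)))) (at x)"
  proof (rule has_derivative_mult_right)
    show "((\<lambda>y. y$i * g y) has_derivative (\<lambda>h. h$i * g x + x$i * (\<Sum>j\<in>UNIV. h$j * pd j g x))) (at x)"
      using has_derivative_mult[OF vecnth_deriv[of i] hp_diff[OF assms]] by (simp add: algebra_simps)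
  qed
  from pd_eq[OF this, of i] show ?thesis using sum_axis[of i "\<lambda>j. pd j g x"]
    by (simp add: axis_def)
qed

lemma sumsq: "(\<Sum>i\<in>UNIV. (x::real^3)$i * x$i) = rw x ^ 2"
  by (simp add: rw_def power2_norm_eq_inner inner_vec_def)

lemma pd_add:
  assumes "F differentiable (at x)" "G differentiable (at x)"
  shows "pd i (\<lambda>y. F y + G y) x = pd i F x + pd i G x"
proof -
  obtain F' G' where F: "(F has_derivative F') (at x)" and G: "(G has_derivative G') (at x)"
    using assms by (auto simp: differentiable_def)
  show ?thesis using pd_eq[OF has_derivative_add[OF F G], of i] pd_eq[OF F, of i] pd_eq[OF G, of i] by simp
qed

lemma term_pow_diff: "hp n g \<Longrightarrow> x \<noteq> 0 \<Longrightarrow> (\<lambda>y. g y * rw y powr b) differentiable (at x)"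
  using term_pow_hasd differentiableI by blast

lemma lap_local:
  assumes "x \<noteq> 0" "\<And>y. y \<noteq> 0 \<Longrightarrow> F y = G y"
  shows "laplacian F x = laplacian G x"
proof -
  have "pd i F y = pd i G y" if "y \<noteq> 0" for i y using pd_local[OF that assms(2)] .
  then have "pd i (pd i F) x = pd i (pd i G) x" for i using pd_local[OF assms(1)] by blast
  then show ?thesis by (simp add: laplacian_def)
qed

lemma lap_pow:
  assumes g: "hp n g" and x: "x \<noteq> 0"
  shows "laplacian (\<lambda>y. g y * rw y powr a) x = laplacian g x * rw x powr a + a * (2 * real n + a + 1) * g x * rw x powr (a-2)"
proof -
  define R where "R = rw x powr a"
  define P where "P = rw x powr (a-2)"
  define Q where "Q = rw x powr (a-2-2)"
  have r: "rw x > 0" using x by (rule rw_pos)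
  have RP: "R = P * rw x ^ 2"
    unfolding R_def P_def using r by (simp del: powr_numeral add: powr_add[symmetric] powr_numeral[symmetric])
  have QP: "Q * rw x ^ 2 = P"
    unfolding Q_def P_def using r by (simp del: powr_numeral add: powr_add[symmetric] powr_numeral[symmetric])
  have E: "pd i (pd i (\<lambda>y. g y * rw y powr a)) x =
      pd i (pd i g) x * R + a * (x$i * pd i g x) * P + a * (g x + x$i * pd i g x) * P + (a-2) * (x$i * (a * (x$i * g x))) * Q" for i
  proof -
    define q where "q = (\<lambda>y. a * (y$i * g y))"
    have hq: "hp (Suc n) q" unfolding q_def by (intro hp_scale hp_mulx g)
    have hg: "hp (n-1) (pd i g)" by (rule hp_pd_hp[OF g])
    have "pd i (pd i (\<lambda>y. g y * rw y powr a)) x = pd i (\<lambda>y. pd i g y * rw y powr a + q y * rw y powr (a-2)) x"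
      by (rule pd_local[OF x]) (simp add: term_pow_pd[OF g] q_def)
    also have "\<dots> = pd i (\<lambda>y. pd i g y * rw y powr a) x + pd i (\<lambda>y. q y * rw y powr (a-2)) x"
      by (rule pd_add) (rule term_pow_diff[OF hg x], rule term_pow_diff[OF hq x])
    also have "\<dots> = pd i (pd i g) x * R + a * (x$i * pd i g x) * P + (pd i q x * P + (a-2) * (x$i * q x) * Q)"
      unfolding term_pow_pd[OF hg x] term_pow_pd[OF hq x] R_def P_def Q_def by simp
    also have "pd i q x = a * (g x + x$i * pd i g x)" unfolding q_def by (rule pd_xi[OF g])
    finally show ?thesis by (simp add: q_def)
  qed
  have S1: "(\<Sum>i\<in>UNIV. x$i * pd i g x) = real n * g x" by (rule hp_euler[OF g])
  have S2: "(\<Sum>i\<in>UNIV. x$i * x$i) = rw x ^ 2" by (rule sumsq)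
  have "laplacian (\<lambda>y. g y * rw y powr a) x = (\<Sum>i\<in>UNIV. pd i (pd i g) x) * R + 2 * a * P * (\<Sum>i\<in>UNIV. x$i * pd i g x)
     + 3 * a * g x * P + (a-2) * a * g x * Q * (\<Sum>i\<in>UNIV. x$i * x$i)"
    unfolding laplacian_def E by (simp add: sum_3 algebra_simps)
  also have "\<dots> = laplacian g x * R + 2 * a * P * (real n * g x) + 3 * a * g x * P + (a-2) * a * g x * (Q * rw x ^ 2)"
    unfolding S1 S2 laplacian_def by (simp add: algebra_simps)
  also have "\<dots> = laplacian g x * rw x powr a + a * (2 * real n + a + 1) * g x * rw x powr (a-2)"
    unfolding QP unfolding R_def[symmetric] P_def[symmetric] by (simp add: algebra_simps)
  finally show ?thesis .
qed

lemma lap_log: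
  assumes g: "hp n g" and x: "x \<noteq> 0"
  shows "laplacian (\<lambda>y. g y * ln (rw y)) x = laplacian g x * ln (rw x) + (2 * real n + 1) * g x * rw x powr (-2)"
proof -
  define L where "L = ln (rw x)"
  define P where "P = rw x powr (-2)"
  define Q where "Q = rw x powr (-2-2)"
  have r: "rw x > 0" using x by (rule rw_pos)
  have QP: "Q * rw x ^ 2 = P"
    unfolding Q_def P_def using r by (simp del: powr_numeral add: powr_add[symmetric] powr_numeral[symmetric])
  have E: "pd i (pd i (\<lambda>y. g y * ln (rw y))) x =
      pd i (pd i g) x * L + (x$i * pd i g x) * P + (1 * (g x + x$i * pd i g x)) * P + (-2) * (x$i * (1 * (x$i * g x))) * Q" for i
  proof -
    define q where "q = (\<lambda>y. 1 * (y$i * g y))"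
    have hq: "hp (Suc n) q" unfolding q_def by (intro hp_scale hp_mulx g)
    have hg: "hp (n-1) (pd i g)" by (rule hp_pd_hp[OF g])
    have d1: "(\<lambda>y. pd i g y * ln (rw y)) differentiable (at x)"
      using has_derivative_mult[OF hp_diff[OF hg] d_ln[OF x]] differentiableI by blast
    have "pd i (pd i (\<lambda>y. g y * ln (rw y))) x = pd i (\<lambda>y. pd i g y * ln (rw y) + q y * rw y powr (-2)) x"
      by (rule pd_local[OF x]) (simp add: term_ln_pd[OF g] q_def)
    also have "\<dots> = pd i (\<lambda>y. pd i g y * ln (rw y)) x + pd i (\<lambda>y. q y * rw y powr (-2)) x"
      by (rule pd_add) (rule d1, rule term_pow_diff[OF hq x])
    also have "\<dots> = pd i (pd i g) x * L + (x$i * pd i g x) * P + (pd i q x * P + (-2) * (x$i * q x) * Q)"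
      unfolding term_ln_pd[OF hg x] term_pow_pd[OF hq x] L_def P_def Q_def by simp
    also have "pd i q x = 1 * (g x + x$i * pd i g x)" unfolding q_def by (rule pd_xi[OF g])
    finally show ?thesis by (simp add: q_def)
  qed
  have S1: "(\<Sum>i\<in>UNIV. x$i * pd i g x) = real n * g x" by (rule hp_euler[OF g])
  have S2: "(\<Sum>i\<in>UNIV. x$i * x$i) = rw x ^ 2" by (rule sumsq)
  have "laplacian (\<lambda>y. g y * ln (rw y)) x = (\<Sum>i\<in>UNIV. pd i (pd i g) x) * L + 2 * P * (\<Sum>i\<in>UNIV. x$i * pd i g x)
     + 3 * g x * P - 2 * g x * Q * (\<Sum>i\<in>UNIV. x$i * x$i)"
    unfolding laplacian_def E by (simp add: sum_3 algebra_simps)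
  also have "\<dots> = laplacian g x * L + 2 * P * (real n * g x) + 3 * g x * P - 2 * g x * (Q * rw x ^ 2)"
    unfolding S1 S2 laplacian_def by (simp add: algebra_simps)
  also have "\<dots> = laplacian g x * ln (rw x) + (2 * real n + 1) * g x * rw x powr (-2)"
    unfolding QP unfolding L_def[symmetric] P_def[symmetric] by (simp add: algebra_simps)
  finally show ?thesis .
qed

inductive gt :: "real \<Rightarrow> (real^3 \<Rightarrow> real) \<Rightarrow> bool" where
  gt_zero: "gt d (\<lambda>x. 0)"
| gt_add: "gt d F \<Longrightarrow> gt d G \<Longrightarrow> gt d (\<lambda>x. F x + G x)"
| gt_pow: "hp n g \<Longrightarrow> real n + b = d \<Longrightarrow> gt d (\<lambda>x. g x * rw x powr b)"
| gt_log: "hp n g \<Longrightarrow> real n + b = d \<Longrightarrow> gt d (\<lambda>x. g x * rw x powr b * ln (rw x))"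

lemma gt_scale: "gt d F \<Longrightarrow> gt d (\<lambda>x. c * F x)"
proof (induction rule: gt.induct)
  case (gt_zero d) then show ?case by (simp add: gt.gt_zero)
next
  case (gt_add d F G) then show ?case using gt.gt_add[of d "\<lambda>x. c * F x" "\<lambda>x. c * G x"] by (simp add: distrib_left)
next
  case (gt_pow n g b d)
  have "gt d (\<lambda>x. (c * g x) * rw x powr b)" by (rule gt.gt_pow[OF hp_scale[OF gt_pow(1)] gt_pow(2)])
  then show ?case by (simp add: mult.assoc)
next
  case (gt_log n g b d)
  have "gt d (\<lambda>x. (c * g x) * rw x powr b * ln (rw x))" by (rule gt.gt_log[OF hp_scale[OF gt_log(1)] gt_log(2)])
  then show ?case by (simp add: mult.assoc)
qed

lemma gt_pdterm:
  assumes "hp n g" "real n + b = d"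
  shows "gt (d-1) (\<lambda>y. pd j g y * rw y powr b)"
proof (cases "n = 0")
  case True
  then have "(\<lambda>y. pd j g y * rw y powr b) = (\<lambda>y. 0)" using hp_pd0[OF assms(1)] by auto
  then show ?thesis by (simp add: gt_zero)
next
  case False
  show ?thesis by (rule gt_pow[OF hp_pd_hp[OF assms(1)]]) (use False assms(2) in \<open>simp add: of_nat_diff\<close>)
qed

lemma gt_pdterm_log:
  assumes "hp n g" "real n + b = d"
  shows "gt (d-1) (\<lambda>y. pd j g y * rw y powr b * ln (rw y))"
proof (cases "n = 0")
  case True
  then have "(\<lambda>y. pd j g y * rw y powr b * ln (rw y)) = (\<lambda>y. 0)" using hp_pd0[OF assms(1)] by auto
  then show ?thesis by (simp add: gt_zero)
next
  case False
  show ?thesis by (rule gt_log[OF hp_pd_hp[OF assms(1)]]) (use False assms(2) in \<open>simp add: of_nat_diff\<close>)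
qed

lemma gt_deriv:
  assumes "gt d F"
  shows "\<exists>D. (\<forall>j. gt (d-1) (D j)) \<and> (\<forall>x. x \<noteq> 0 \<longrightarrow> (F has_derivative (\<lambda>h. \<Sum>j\<in>UNIV. h$j * D j x)) (at x))"
  using assms
proof induction
  case (gt_zero d)
  show ?case by (rule exI[of _ "\<lambda>j x. 0"]) (auto intro!: derivative_eq_intros gt.intros)
next
  case (gt_add d F G)
  then obtain D1 D2 where D1: "\<forall>j. gt (d-1) (D1 j)" "\<forall>x. x \<noteq> 0 \<longrightarrow> (F has_derivative (\<lambda>h. \<Sum>j\<in>UNIV. h$j * D1 j x)) (at x)"
    and D2: "\<forall>j. gt (d-1) (D2 j)" "\<forall>x. x \<noteq> 0 \<longrightarrow> (G has_derivative (\<lambda>h. \<Sum>j\<in>UNIV. h$j * D2 j x)) (at x)"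
    by blast
  show ?case
  proof (rule exI[of _ "\<lambda>j x. D1 j x + D2 j x"], intro conjI allI impI)
    fix j show "gt (d-1) (\<lambda>x. D1 j x + D2 j x)" using D1 D2 by (auto intro: gt.intros)
  next
    fix x :: "real^3" assume "x \<noteq> 0"
    then show "((\<lambda>x. F x + G x) has_derivative (\<lambda>h. \<Sum>j\<in>UNIV. h$j * (D1 j x + D2 j x))) (at x)"
      using D1 D2 by (auto intro!: derivative_eq_intros simp: distrib_left sum.distrib)
  qed
next
  case (gt_pow n g b d)
  show ?case
  proof (rule exI[of _ "\<lambda>j y. pd j g y * rw y powr b + (b * (y$j * g y)) * rw y powr (b-2)"], intro conjI allI impI)
    fix j
    have "gt (d-1) (\<lambda>y. (b * (y$j * g y)) * rw y powr (b-2))"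
      by (rule gt.gt_pow[OF hp_scale[OF hp_mulx[OF gt_pow(1)]]]) (use gt_pow(2) in auto)
    then show "gt (d-1) (\<lambda>y. pd j g y * rw y powr b + (b * (y$j * g y)) * rw y powr (b-2))"
      by (intro gt.gt_add gt_pdterm[OF gt_pow(1,2)])
  next
    fix x :: "real^3" assume "x \<noteq> 0"
    then show "((\<lambda>x. g x * rw x powr b) has_derivative (\<lambda>h. \<Sum>j\<in>UNIV. h$j * (pd j g x * rw x powr b + (b * (x$j * g x)) * rw x powr (b-2)))) (at x)"
      by (rule term_pow_hasd[OF gt_pow(1)])
  qed
next
  case (gt_log n g b d)
  show ?case
  proof (rule exI[of _ "\<lambda>j y. pd j g y * rw y powr b * ln (rw y)
     + (b * (y$j * g y)) * rw y powr (b-2) * ln (rw y) + (y$j * g y) * rw y powr (b-2)"], intro conjI allI impI)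
    fix j
    have "gt (d-1) (\<lambda>y. (b * (y$j * g y)) * rw y powr (b-2) * ln (rw y))"
      by (rule gt.gt_log[OF hp_scale[OF hp_mulx[OF gt_log(1)]]]) (use gt_log(2) in auto)
    moreover have "gt (d-1) (\<lambda>y. (y$j * g y) * rw y powr (b-2))"
      by (rule gt.gt_pow[OF hp_mulx[OF gt_log(1)]]) (use gt_log(2) in auto)
    ultimately show "gt (d-1) (\<lambda>y. pd j g y * rw y powr b * ln (rw y)
     + (b * (y$j * g y)) * rw y powr (b-2) * ln (rw y) + (y$j * g y) * rw y powr (b-2))"
      by (intro gt.gt_add gt_pdterm_log[OF gt_log(1,2)])
  next
    fix x :: "real^3" assume "x \<noteq> 0"
    then show "((\<lambda>x. g x * rw x powr b * ln (rw x)) has_derivative (\<lambda>h. \<Sum>j\<in>UNIV. h$j * (pd j g x * rw x powr b * ln (rw x)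
     + (b * (x$j * g x)) * rw x powr (b-2) * ln (rw x) + (x$j * g x) * rw x powr (b-2)))) (at x)"
      by (rule term_log_hasd[OF gt_log(1)])
  qed
qed

lemma gt_diff: "gt d F \<Longrightarrow> x \<noteq> 0 \<Longrightarrow> F differentiable (at x)"
  using gt_deriv differentiableI by blast

lemma gt_pdD:
  assumes "gt d F"
  shows "\<exists>D. gt (d-1) D \<and> (\<forall>y. y \<noteq> 0 \<longrightarrow> pd i F y = D y)"
proof -
  obtain D where D: "\<forall>j. gt (d-1) (D j)" "\<forall>x. x \<noteq> 0 \<longrightarrow> (F has_derivative (\<lambda>h. \<Sum>j\<in>UNIV. h$j * D j x)) (at x)"
    using gt_deriv[OF assms] by blast
  show ?thesis
    by (rule exI[of _ "D i"]) (use D pd_eq sum_axis in auto)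
qed

lemma lap_add:
  assumes F: "gt d F" and G: "gt d' G" and x: "x \<noteq> 0"
  shows "laplacian (\<lambda>y. F y + G y) x = laplacian F x + laplacian G x"
proof -
  have "pd i (pd i (\<lambda>y. F y + G y)) x = pd i (pd i F) x + pd i (pd i G) x" for i
  proof -
    obtain DF where DF: "gt (d-1) DF" "\<forall>y. y \<noteq> 0 \<longrightarrow> pd i F y = DF y" using gt_pdD[OF F] by blast
    obtain DG where DG: "gt (d'-1) DG" "\<forall>y. y \<noteq> 0 \<longrightarrow> pd i G y = DG y" using gt_pdD[OF G] by blast
    have "pd i (pd i (\<lambda>y. F y + G y)) x = pd i (\<lambda>y. DF y + DG y) x"
      by (rule pd_local[OF x]) (use DF DG pd_add gt_diff F G in auto)
    also have "\<dots> = pd i DF x + pd i DG x" by (rule pd_add) (use gt_diff DF DG x in auto)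
    also have "\<dots> = pd i (pd i F) x + pd i (pd i G) x"
      using pd_local[OF x, of "pd i F" DF] pd_local[OF x, of "pd i G" DG] DF DG by auto
    finally show ?thesis .
  qed
  then show ?thesis by (simp add: laplacian_def sum.distrib)
qed

lemma lap_scale:
  assumes F: "gt d F" and x: "x \<noteq> 0"
  shows "laplacian (\<lambda>y. c * F y) x = c * laplacian F x"
proof -
  have "pd i (\<lambda>y. c * F y) y = c * pd i F y" if yy: "y \<noteq> 0" for i y
  proof -
    obtain F' where "(F has_derivative F') (at y)" using gt_diff[OF F yy] by (auto simp: differentiable_def)
    then show ?thesis using pd_eq[OF has_derivative_mult_right[of F F' "at y" c], of i] pd_eq[of F F' y i] by simp
  qed
  moreover have "pd i (\<lambda>y. c * DF y) x = c * pd i DF x" if gg: "gt (d-1) DF" for i DF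
  proof -
    obtain F' where "(DF has_derivative F') (at x)" using gt_diff[OF gg x] by (auto simp: differentiable_def)
    then show ?thesis using pd_eq[OF has_derivative_mult_right[of DF F' "at x" c], of i] pd_eq[of DF F' x i] by simp
  qed
  ultimately have "pd i (pd i (\<lambda>y. c * F y)) x = c * pd i (pd i F) x" for i
  proof -
    obtain DF where DF: "gt (d-1) DF" "\<forall>y. y \<noteq> 0 \<longrightarrow> pd i F y = DF y" using gt_pdD[OF F] by blast
    have "pd i (pd i (\<lambda>y. c * F y)) x = pd i (\<lambda>y. c * DF y) x"
      by (rule pd_local[OF x]) (use DF \<open>\<And>i y. y \<noteq> 0 \<Longrightarrow> pd i (\<lambda>y. c * F y) y = c * pd i F y\<close> in auto)
    also have "\<dots> = c * pd i DF x" using DF(1) \<open>\<And>i DF. gt (d-1) DF \<Longrightarrow> pd i (\<lambda>y. c * DF y) x = c * pd i DF x\<close> by blast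
    also have "\<dots> = c * pd i (pd i F) x" using pd_local[OF x, of "pd i F" DF] DF by auto
    finally show ?thesis .
  qed
  then show ?thesis by (simp add: laplacian_def sum_distrib_left)
qed

lemma gt_bound:
  assumes "gt d F"
  shows "\<exists>C. \<forall>x. x \<noteq> 0 \<and> rw x \<le> exp (-1) \<longrightarrow> \<bar>F x\<bar> \<le> C * (rw x powr d * \<bar>ln (rw x)\<bar>)"
  using assms
proof induction
  case (gt_zero d) then show ?case by (auto intro!: exI[of _ 0])
next
  case (gt_add d F G)
  then obtain C1 C2 where C1: "\<forall>x. x \<noteq> 0 \<and> rw x \<le> exp (-1) \<longrightarrow> \<bar>F x\<bar> \<le> C1 * (rw x powr d * \<bar>ln (rw x)\<bar>)"
    and C2: "\<forall>x. x \<noteq> 0 \<and> rw x \<le> exp (-1) \<longrightarrow> \<bar>G x\<bar> \<le> C2 * (rw x powr d * \<bar>ln (rw x)\<bar>)" by blast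
  show ?case
  proof (intro exI[of _ "C1 + C2"] allI impI)
    fix x :: "real^3" assume "x \<noteq> 0 \<and> rw x \<le> exp (-1)"
    then have "\<bar>F x\<bar> + \<bar>G x\<bar> \<le> C1 * (rw x powr d * \<bar>ln (rw x)\<bar>) + C2 * (rw x powr d * \<bar>ln (rw x)\<bar>)"
      using C1 C2 by (intro add_mono) auto
    then show "\<bar>F x + G x\<bar> \<le> (C1 + C2) * (rw x powr d * \<bar>ln (rw x)\<bar>)"
      by (simp add: distrib_right)
  qed
next
  case (gt_pow n g b d)
  obtain C where C: "C \<ge> 0" "\<forall>x. \<bar>g x\<bar> \<le> C * norm x ^ n" using hp_bound[OF gt_pow(1)] by blast
  show ?case
  proof (intro exI[of _ C] allI impI)
    fix x :: "real^3" assume a: "x \<noteq> 0 \<and> rw x \<le> exp (-1)"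
    then have r: "rw x > 0" by (simp add: rw_pos)
    have "ln (rw x) \<le> ln (exp (-1))" using a r by (subst ln_le_cancel_iff) auto
    then have l: "ln (rw x) \<le> -1" by simp
    have p0: "rw x ^ n = rw x powr real n" using r by (simp add: powr_realpow)
    have p: "rw x ^ n * rw x powr b = rw x powr d"
      unfolding p0 gt_pow(2)[symmetric] by (simp add: powr_add)
    have "\<bar>g x * rw x powr b\<bar> = \<bar>g x\<bar> * rw x powr b" by (simp add: abs_mult)
    also have "\<dots> \<le> (C * rw x ^ n) * rw x powr b" using C by (intro mult_right_mono) (auto simp: rw_def)
    also have "\<dots> = C * rw x powr d" using p by simp
    also have "\<dots> \<le> C * (rw x powr d * \<bar>ln (rw x)\<bar>)"
    proof (intro mult_left_mono)
      have "rw x powr d * 1 \<le> rw x powr d * \<bar>ln (rw x)\<bar>" using l by (intro mult_left_mono) auto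
      then show "rw x powr d \<le> rw x powr d * \<bar>ln (rw x)\<bar>" by simp
    qed (use C in auto)
    finally show "\<bar>g x * rw x powr b\<bar> \<le> C * (rw x powr d * \<bar>ln (rw x)\<bar>)" .
  qed
next
  case (gt_log n g b d)
  obtain C where C: "C \<ge> 0" "\<forall>x. \<bar>g x\<bar> \<le> C * norm x ^ n" using hp_bound[OF gt_log(1)] by blast
  show ?case
  proof (intro exI[of _ C] allI impI)
    fix x :: "real^3" assume a: "x \<noteq> 0 \<and> rw x \<le> exp (-1)"
    then have r: "rw x > 0" by (simp add: rw_pos)
    have p0: "rw x ^ n = rw x powr real n" using r by (simp add: powr_realpow)
    have p: "rw x ^ n * rw x powr b = rw x powr d"
      unfolding p0 gt_log(2)[symmetric] by (simp add: powr_add)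
    have "\<bar>g x * rw x powr b * ln (rw x)\<bar> = \<bar>g x\<bar> * rw x powr b * \<bar>ln (rw x)\<bar>" by (simp add: abs_mult)
    also have "\<dots> \<le> (C * rw x ^ n) * rw x powr b * \<bar>ln (rw x)\<bar>" using C
      by (intro mult_right_mono) (auto simp: rw_def)
    also have "\<dots> = C * (rw x powr d * \<bar>ln (rw x)\<bar>)" using p by (simp add: mult.assoc)
    finally show "\<bar>g x * rw x powr b * ln (rw x)\<bar> \<le> C * (rw x powr d * \<bar>ln (rw x)\<bar>)" .
  qed
qed

lemma pds_gt:
  assumes "gt d F"
  shows "\<exists>G. gt (d - real (length is)) G \<and> (\<forall>x. x \<noteq> 0 \<longrightarrow> pds is F x = G x)"
proof (induction "is")
  case Nil then show ?case using assms by auto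
next
  case (Cons i "is")
  then obtain G where G: "gt (d - real (length is)) G" "\<forall>x. x \<noteq> 0 \<longrightarrow> pds is F x = G x" by blast
  obtain D where D: "gt (d - real (length is) - 1) D" "\<forall>y. y \<noteq> 0 \<longrightarrow> pd i G y = D y" using gt_pdD[OF G(1)] by blast
  show ?case
  proof (intro exI[of _ D] conjI allI impI)
    show "gt (d - real (length (i # is))) D" using D(1) by (simp add: algebra_simps)
  next
    fix x :: "real^3" assume x: "x \<noteq> 0"
    have "pds (i # is) F x = pd i (pds is F) x" by simp
    also have "\<dots> = pd i G x" by (rule pd_local[OF x]) (use G in auto)
    finally show "pds (i # is) F x = D x" using D x by simp
  qed
qed

lemma line_deriv:
  assumes "(F has_derivative F') (at x)"
  shows "((\<lambda>t::real. F (x + t *\<^sub>R v)) has_real_derivative F' v) (at 0)"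
proof -
  have l: "((\<lambda>t::real. x + t *\<^sub>R v) has_derivative (\<lambda>t. t *\<^sub>R v)) (at 0)"
    by (auto intro!: derivative_eq_intros)
  have "((\<lambda>t::real. F (x + t *\<^sub>R v)) has_derivative (\<lambda>t. F' (t *\<^sub>R v))) (at 0)"
    using has_derivative_compose[OF l, of F F'] assms by simp
  moreover have "(\<lambda>t. F' (t *\<^sub>R v)) = (*) (F' v)"
    using has_derivative_bounded_linear[OF assms]
    by (auto simp: linear_simps mult.commute)
  ultimately show ?thesis by (simp add: has_field_derivative_def)
qed

lemma gt_W:
  assumes "gt 1 F"
  shows "F \<in> W 1 U"
  unfolding W_def
proof (intro CollectI conjI allI)
  fix "is" :: "3 list"
  obtain G where G: "gt (1 - real (length is)) G" "\<forall>x. x \<noteq> 0 \<longrightarrow> pds is F x = G x"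
    using pds_gt[OF assms] by blast
  obtain C where C: "\<forall>x. x \<noteq> 0 \<and> rw x \<le> exp (-1) \<longrightarrow> \<bar>G x\<bar> \<le> C * (rw x powr (1 - real (length is)) * \<bar>ln (rw x)\<bar>)"
    using gt_bound[OF G(1)] by blast
  have "eventually (\<lambda>x. norm (pds is F x) \<le> C * norm (rw x powr (real 1 - real (length is)) * ln (rw x))) (at 0 within U - {0})"
    unfolding eventually_at
  proof (intro exI[of _ "exp (-1)"] conjI ballI impI)
    fix x :: "real^3" assume "x \<in> U - {0}" "x \<noteq> 0 \<and> dist x 0 < exp (-1)"
    then have "x \<noteq> 0" "rw x \<le> exp (-1)" by (auto simp: rw_def)
    then show "norm (pds is F x) \<le> C * norm (rw x powr (real 1 - real (length is)) * ln (rw x))"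
      using C G(2) by (simp add: abs_mult)
  qed simp
  then show "pds is F \<in> O[at 0 within U - {0}](\<lambda>x. rw x powr (real 1 - real (length is)) * ln (rw x))"
    by (rule bigoI)
next
  show "smooth_on_set F (U - {0})"
    unfolding smooth_on_set_def
  proof (intro allI conjI ballI)
    fix "is" :: "3 list"
    obtain G where G: "gt (1 - real (length is)) G" "\<forall>x. x \<noteq> 0 \<longrightarrow> pds is F x = G x"
      using pds_gt[OF assms] by blast
    have "continuous_on (U - {0}) G"
      by (intro continuous_at_imp_continuous_on ballI differentiable_imp_continuous_within gt_diff[OF G(1)]) auto
    moreover have "\<forall>x\<in>U - {0}. pds is F x = G x" using G(2) by auto
    ultimately show "continuous_on (U - {0}) (pds is F)" using continuous_on_cong[OF refl] by metis
    fix i x assume x: "x \<in> U - {0}"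
    obtain G' where G': "(G has_derivative G') (at x)" using gt_diff[OF G(1)] x by (auto simp: differentiable_def)
    have dG: "((\<lambda>t::real. G (x + t *\<^sub>R axis i 1)) has_real_derivative G' (axis i 1)) (at 0)"
      by (rule line_deriv[OF G'])
    have ev: "eventually (\<lambda>t. pds is F (x + t *\<^sub>R axis i 1) = G (x + t *\<^sub>R axis i 1)) (nhds 0)"
      using line_ev[of x "axis i 1"] x G(2) by (auto elim!: eventually_mono)
    have "((\<lambda>t::real. pds is F (x + t *\<^sub>R axis i 1)) has_real_derivative G' (axis i 1)) (at 0)"
      using DERIV_cong_ev[OF refl ev refl] dG by simp
    then show "(\<lambda>t. pds is F (x + t *\<^sub>R axis i 1)) differentiable (at 0)"
      unfolding has_field_derivative_def by (rule differentiableI)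
  qed
qed

lemma lap_small:
  assumes "hp n g" "n \<le> 1"
  shows "laplacian g x = 0"
proof -
  have "pd i (pd i g) x = 0" for i
  proof -
    have "hp (n-1) (pd i g)" by (rule hp_pd_hp[OF assms(1)])
    then have "hp 0 (pd i g)" using assms(2) by simp
    then show ?thesis by (rule hp_pd0) simp
  qed
  then show ?thesis by (simp add: laplacian_def)
qed

lemma solve:
  "hp n g \<Longrightarrow> \<exists>u. gt 1 u \<and> (\<forall>x. x \<noteq> 0 \<longrightarrow> laplacian u x = g x * rw x powr (- real n - 1))"
proof (induction n arbitrary: g rule: less_induct)
  case (less n g)
  show ?case
  proof (cases "n = 1")
    case True
    define u where "u = (\<lambda>y. (1/3) * (g y * rw y powr 0 * ln (rw y)))"
    have gl: "gt 1 (\<lambda>y. g y * rw y powr 0 * ln (rw y))"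
      by (rule gt_log[OF less.prems]) (simp add: True)
    have "gt 1 u" unfolding u_def by (rule gt_scale[OF gl])
    moreover have "laplacian u x = g x * rw x powr (- real n - 1)" if x: "x \<noteq> 0" for x
    proof -
      have "laplacian u x = (1/3) * laplacian (\<lambda>y. g y * rw y powr 0 * ln (rw y)) x"
        unfolding u_def by (rule lap_scale[OF gl x])
      also have "laplacian (\<lambda>y. g y * rw y powr 0 * ln (rw y)) x = laplacian (\<lambda>y. g y * ln (rw y)) x"
        by (rule lap_local[OF x]) (simp add: rw_def)
      also have "\<dots> = laplacian g x * ln (rw x) + (2 * real n + 1) * g x * rw x powr (-2)"
        by (rule lap_log[OF less.prems x])
      also have "laplacian g x = 0" by (rule lap_small[OF less.prems]) (simp add: True)
      finally show ?thesis using True by simp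
    qed
    ultimately show ?thesis by blast
  next
    case False
    define a where "a = 1 - real n"
    define c where "c = a * (2 * real n + a + 1)"
    have "a \<noteq> 0" using False unfolding a_def by simp
    moreover have "2 * real n + a + 1 \<noteq> 0" unfolding a_def by simp
    ultimately have c0: "c \<noteq> 0" unfolding c_def by simp
    have am: "a - 2 = - real n - 1" unfolding a_def by simp
    define u0 where "u0 = (\<lambda>y. (1/c) * (g y * rw y powr a))"
    have gp: "gt 1 (\<lambda>y. g y * rw y powr a)" by (rule gt_pow[OF less.prems]) (simp add: a_def)
    have gu0: "gt 1 u0" unfolding u0_def by (rule gt_scale[OF gp])
    have lu0: "laplacian u0 x = (1/c) * (laplacian g x * rw x powr a) + g x * rw x powr (- real n - 1)"
      if x: "x \<noteq> 0" for x
    proof -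
      have "laplacian u0 x = (1/c) * laplacian (\<lambda>y. g y * rw y powr a) x"
        unfolding u0_def by (rule lap_scale[OF gp x])
      also have "\<dots> = (1/c) * (laplacian g x * rw x powr a + c * g x * rw x powr (a-2))"
        unfolding lap_pow[OF less.prems x] c_def by simp
      finally show ?thesis using c0 am by (simp add: algebra_simps)
    qed
    show ?thesis
    proof (cases "n = 0")
      case True
      have "laplacian g x = 0" for x by (rule lap_small[OF less.prems]) (simp add: True)
      then show ?thesis using gu0 lu0 by auto
    next
      case n0: False
      with False have n2: "n \<ge> 2" by simp
      have "hp (n-2) (laplacian g)" by (rule hp_lap[OF less.prems])
      moreover have "n - 2 < n" using n2 by simp
      ultimately obtain u1 where u1: "gt 1 u1" "\<forall>x. x \<noteq> 0 \<longrightarrow> laplacian u1 x = laplacian g x * rw x powr (- real (n-2) - 1)"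
        using less.IH by blast
      have e: "- real (n-2) - 1 = a" unfolding a_def using n2 by (simp add: of_nat_diff)
      define u where "u = (\<lambda>y. u0 y + (-1/c) * u1 y)"
      have gs: "gt 1 (\<lambda>y. (-1/c) * u1 y)" by (rule gt_scale[OF u1(1)])
      have "gt 1 u" unfolding u_def by (rule gt_add[OF gu0 gs])
      moreover have "laplacian u x = g x * rw x powr (- real n - 1)" if x: "x \<noteq> 0" for x
      proof -
        have "laplacian u x = laplacian u0 x + laplacian (\<lambda>y. (-1/c) * u1 y) x"
          unfolding u_def by (rule lap_add[OF gu0 gs x])
        also have "laplacian (\<lambda>y. (-1/c) * u1 y) x = (-1/c) * laplacian u1 x"
          by (rule lap_scale[OF u1(1) x])
        finally show ?thesis using lu0[OF x] u1(2) x e by (simp add: algebra_simps)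
      qed
      ultimately show ?thesis by blast
    qed
  qed
qed

theorem lemma3p7:
  fixes U :: "(real^3) set" and f :: "real^3 \<Rightarrow> real" and k :: nat
    and L :: "(real^3 \<Rightarrow> real) \<Rightarrow> real^3 \<Rightarrow> real"
  assumes "open U" and "0 \<in> U"
    and "homogeneous_poly k f"
    and "diff_operator L"
    and "\<forall>g\<in>W 1 U. L g \<in> W 1 U"
  shows "\<exists>u v'. u \<in> W 1 U \<and> v' \<in> W 1 U \<and>
     (\<forall>x\<in>U - {0}. laplacian u x + L u x = f x / rw x ^ (k + 1) + v' x)"
proof -
  obtain u where u: "gt 1 u" "\<forall>x. x \<noteq> 0 \<longrightarrow> laplacian u x = f x * rw x powr (- real k - 1)"
    using solve[OF hp_homog[OF assms(3)]] by blast
  have uW: "u \<in> W 1 U" by (rule gt_W[OF u(1)])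
  have "laplacian u x = f x / rw x ^ (k + 1)" if x: "x \<in> U - {0}" for x
  proof -
    have r: "rw x > 0" using x by (simp add: rw_pos)
    have m: "- real k - 1 = - real (k + 1)" by simp
    have "rw x powr (- real k - 1) = inverse (rw x powr real (k + 1))"
      unfolding m by (rule powr_minus)
    also have "\<dots> = inverse (rw x ^ (k + 1))" using r by (simp only: powr_realpow)
    finally show ?thesis using u(2) x by (simp add: divide_inverse)
  qed
  then show ?thesis using uW assms(5) by (intro exI[of _ u] exI[of _ "L u"]) auto
qed

end
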